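(* Let $H_1,H_2$ be linear subspaces of $\mathbb{R}^n$. The primitive quartics $h_{4,H_1}$ and $h_{4,H_2}$ are congruent if and only if either $\dim H_1=\dim H_2$ or $\dim H_1=n-\dim H_2$.
   Context: $\mathbb{R}^n$ carries the standard Euclidean inner product and norm $|\cdot|$. For a linear subspace $H\subseteq\mathbb{R}^n$, write $\xi,\eta$ for the orthogonal projections of $x$ onto $H$ and $H^\perp$, and set $h_{4,H}(x)=|\xi|^4-6|\xi|^2|\eta|^2+|\eta|^4$. Two polynomials $f_1,f_2$ on $\mathbb{R}^n$ are congruent if there is an orthogonal transformation $U\in O(n)$ and $\epsilon\in\{1,-1\}$ with $f_2(x)=\epsilon f_1(Ux)$ for all $x$. *)

theory Defs
  imports "HOL-Analysis.Analysis"
begin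

definition proj_sub :: "'a::euclidean_space set \<Rightarrow> 'a \<Rightarrow> 'a" where
  "proj_sub H x = (THE y. y \<in> H \<and> (\<forall>z\<in>H. orthogonal (x - y) z))"

definition h4 :: "'a::euclidean_space set \<Rightarrow> 'a \<Rightarrow> real" where
  "h4 H x = (let \<xi> = proj_sub H x; \<eta> = x - proj_sub H x in
     norm \<xi> ^ 4 - 6 * norm \<xi> ^ 2 * norm \<eta> ^ 2 + norm \<eta> ^ 4)"

definition congruent_fun :: "('a::euclidean_space \<Rightarrow> real) \<Rightarrow> ('a \<Rightarrow> real) \<Rightarrow> bool" where
  "congruent_fun f1 f2 \<longleftrightarrow>
     (\<exists>U \<epsilon>. orthogonal_transformation U \<and> \<epsilon> \<in> {1, -1} \<and> (\<forall>x. f2 x = \<epsilon> * f1 (U x)))"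

end

theory Submission
  imports Defs
begin

lemma pr_ex:
  fixes H :: "'a::euclidean_space set"
  assumes "subspace H"
  shows "\<exists>y. y \<in> H \<and> (\<forall>z\<in>H. orthogonal (x - y) z)"
proof -
  obtain y z where "y \<in> span H" "\<And>w. w \<in> span H \<Longrightarrow> orthogonal z w" "x = y + z"
    using orthogonal_subspace_decomp_exists[of H x] by blast
  moreover have "span H = H" using assms by (simp add: span_eq_iff)
  ultimately have "y \<in> H" "\<forall>z\<in>H. orthogonal (x - y) z" by auto
  then show ?thesis by blast
qed

lemma pr_uniq:
  fixes H :: "'a::euclidean_space set"
  assumes "subspace H" "y \<in> H" "\<forall>z\<in>H. orthogonal (x - y) z"
    "y' \<in> H" "\<forall>z\<in>H. orthogonal (x - y') z"
  shows "y = y'"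
proof -
  have "y - y' \<in> H" using assms by (simp add: subspace_diff)
  then have "orthogonal (x - y') (y - y')" "orthogonal (x - y) (y - y')" using assms by auto
  then have "orthogonal (y - y') (y - y')"
    by (simp add: orthogonal_def inner_diff_left)
  then show ?thesis by (simp add: orthogonal_self)
qed

lemma pr_char:
  assumes "subspace H" "y \<in> H" "\<forall>z\<in>H. orthogonal (x - y) z"
  shows "proj_sub H x = y"
  unfolding proj_sub_def
  by (rule the_equality) (use assms pr_uniq in blast)+

lemma pr_in: assumes "subspace H" shows "proj_sub H x \<in> H"
proof -
  obtain y where "y \<in> H \<and> (\<forall>z\<in>H. orthogonal (x - y) z)" using pr_ex[OF assms] by blast
  then show ?thesis using pr_char[OF assms] by auto
qed

lemma pr_orth: assumes "subspace H" "z \<in> H" shows "orthogonal (x - proj_sub H x) z"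
proof -
  obtain y where "y \<in> H \<and> (\<forall>z\<in>H. orthogonal (x - y) z)" using pr_ex[OF assms(1)] by blast
  then show ?thesis using pr_char[OF assms(1)] assms by auto
qed

lemma pr_compl_in: assumes "subspace H" shows "x - proj_sub H x \<in> orthogonal_comp H"
  using pr_orth[OF assms] by (auto simp: orthogonal_comp_def orthogonal_commute)

lemma pr_comp: assumes "subspace H"
  shows "proj_sub (orthogonal_comp H) x = x - proj_sub H x"
proof (rule pr_char)
  show "subspace (orthogonal_comp H)" by (rule subspace_orthogonal_comp)
  show "x - proj_sub H x \<in> orthogonal_comp H" by (rule pr_compl_in[OF assms])
  show "\<forall>z\<in>orthogonal_comp H. orthogonal (x - (x - proj_sub H x)) z"
    using pr_in[OF assms] by (auto simp: orthogonal_comp_def)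
qed

lemma pr_self: assumes "subspace H" "x \<in> H" shows "proj_sub H x = x"
  using assms by (intro pr_char) (auto simp: orthogonal_clauses)

lemma pr_zero: assumes "subspace H" "x \<in> orthogonal_comp H" shows "proj_sub H x = 0"
  using assms by (intro pr_char) (auto simp: orthogonal_comp_def orthogonal_commute subspace_0)

lemma pr_pyth: assumes "subspace H"
  shows "norm x ^ 2 = norm (proj_sub H x) ^ 2 + norm (x - proj_sub H x) ^ 2"
proof -
  have "orthogonal (proj_sub H x) (x - proj_sub H x)"
    using pr_orth[OF assms pr_in[OF assms]] orthogonal_commute by blast
  then have "norm (proj_sub H x + (x - proj_sub H x)) ^ 2 = norm (proj_sub H x) ^ 2 + norm (x - proj_sub H x) ^ 2"
    by (rule norm_add_Pythagorean)
  then show ?thesis by simp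
qed

definition aa :: "'a::euclidean_space set \<Rightarrow> 'a \<Rightarrow> real" where
  "aa H x = norm (proj_sub H x) ^ 2"

lemma h4_alt: assumes "subspace H"
  shows "h4 H x = (norm x ^ 2) ^ 2 - 8 * aa H x * (norm x ^ 2 - aa H x)"
proof -
  have e: "norm (x - proj_sub H x) ^ 2 = norm x ^ 2 - aa H x"
    using pr_pyth[OF assms, of x] by (simp add: aa_def)
  have "h4 H x = (aa H x)^2 - 6 * aa H x * norm (x - proj_sub H x) ^ 2 + (norm (x - proj_sub H x) ^ 2)^2"
    by (simp add: h4_def Let_def aa_def power_mult[symmetric])
  also have "\<dots> = (norm x ^ 2) ^ 2 - 8 * aa H x * (norm x ^ 2 - aa H x)"
    unfolding e by (simp add: algebra_simps power2_eq_square)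
  finally show ?thesis .
qed

lemma h4_comp: assumes "subspace H" shows "h4 (orthogonal_comp H) x = h4 H x"
  by (simp add: h4_def Let_def pr_comp[OF assms] algebra_simps)

lemma aa_full: assumes "subspace H" "aa H x = norm x ^ 2" shows "x \<in> H"
proof -
  have "norm (x - proj_sub H x) ^ 2 = 0" using pr_pyth[OF assms(1), of x] assms(2) by (simp add: aa_def)
  then have "x = proj_sub H x" by simp
  then show ?thesis using pr_in[OF assms(1), of x] by simp
qed

lemma aa_null: assumes "subspace H" "aa H x = 0" shows "x \<in> orthogonal_comp H"
  using pr_compl_in[OF assms(1), of x] assms(2) by (simp add: aa_def)

lemma aa_in: assumes "subspace H" "x \<in> H" shows "aa H x = norm x ^ 2"
  using pr_self[OF assms] by (simp add: aa_def)

lemma aa_out: assumes "subspace H" "x \<in> orthogonal_comp H" shows "aa H x = 0"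
  using pr_zero[OF assms] by (simp add: aa_def)

lemma dim_comp: assumes "subspace (H::'a::euclidean_space set)"
  shows "dim (orthogonal_comp H) = DIM('a) - dim H"
proof -
  have s: "{x + y |x y. x \<in> H \<and> y \<in> orthogonal_comp H} = UNIV"
  proof (intro set_eqI iffI)
    fix x :: 'a
    have "x \<in> H + orthogonal_comp H" using subspace_sum_orthogonal_comp[OF assms] by simp
    then obtain a b where "a \<in> H" "b \<in> orthogonal_comp H" "x = a + b" by (rule set_plus_elim)
    then show "x \<in> {x + y |x y. x \<in> H \<and> y \<in> orthogonal_comp H}" by blast
  qed auto
  have "dim {x + y |x y. x \<in> H \<and> y \<in> orthogonal_comp H} + dim (H \<inter> orthogonal_comp H)
      = dim H + dim (orthogonal_comp H)"
    by (rule dim_sums_Int[OF assms subspace_orthogonal_comp])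
  then show ?thesis unfolding s orthogonal_Int_0[OF assms] by simp
qed

lemma union_sub:
  assumes "subspace S" "subspace A" "subspace B" "S \<subseteq> A \<union> B"
  shows "S \<subseteq> A \<or> S \<subseteq> B"
proof (rule ccontr)
  assume "\<not> ?thesis"
  then obtain u v where u: "u \<in> S" "u \<notin> A" and v: "v \<in> S" "v \<notin> B" by blast
  then have "u \<in> B" "v \<in> A" using assms by auto
  have "u + v \<in> S" using u v assms by (simp add: subspace_add)
  then have "u + v \<in> A \<or> u + v \<in> B" using assms by auto
  then show False
  proof
    assume "u + v \<in> A" then have "u + v - v \<in> A" using subspace_diff[OF assms(2) _ \<open>v \<in> A\<close>] by blast
    then show False using u by simp
  next
    assume "u + v \<in> B" then have "u + v - u \<in> B" using subspace_diff[OF assms(3) _ \<open>u \<in> B\<close>] by blast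
    then show False using v by simp
  qed
qed


lemma core:
  fixes G K :: "'a::euclidean_space set"
  assumes G: "subspace G" and K: "subspace K" and e: "\<epsilon> \<in> {1, -1}"
    and eq: "\<forall>x. h4 K x = \<epsilon> * h4 G x"
  shows "dim G = dim K \<or> dim G = DIM('a) - dim K"
proof (cases "\<epsilon> = 1")
  case True
  have key: "aa K x = aa G x \<or> aa K x = norm x ^ 2 - aa G x" for x
  proof -
    have "(norm x ^ 2) ^ 2 - 8 * aa K x * (norm x ^ 2 - aa K x) = (norm x ^ 2) ^ 2 - 8 * aa G x * (norm x ^ 2 - aa G x)"
      using eq True h4_alt[OF G, of x] h4_alt[OF K, of x] by simp
    then have "(aa K x - aa G x) * (norm x ^ 2 - aa K x - aa G x) = 0"
      by (simp add: algebra_simps)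
    then show ?thesis by auto
  qed
  let ?Gp = "orthogonal_comp G" and ?Kp = "orthogonal_comp K"
  have sG: "subspace ?Gp" and sK: "subspace ?Kp" by (rule subspace_orthogonal_comp)+
  have "G \<subseteq> K \<union> ?Kp"
  proof
    fix x assume "x \<in> G"
    then have "aa G x = norm x ^ 2" using aa_in G by blast
    then show "x \<in> K \<union> ?Kp" using key[of x] aa_full[OF K] aa_null[OF K] by auto
  qed
  then have "G \<subseteq> K \<or> G \<subseteq> ?Kp" using union_sub[OF G K sK] by blast
  then have "dim G \<le> dim K \<or> dim G \<le> dim ?Kp" using dim_subset by blast
  then have c1: "dim G \<le> dim K \<or> dim G \<le> DIM('a) - dim K"
    using dim_comp[OF K] by simp
  have "K \<subseteq> G \<union> ?Gp"
  proof
    fix x assume "x \<in> K"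
    then have "aa K x = norm x ^ 2" using aa_in K by blast
    then show "x \<in> G \<union> ?Gp" using key[of x] aa_full[OF G] aa_null[OF G] by auto
  qed
  then have "K \<subseteq> G \<or> K \<subseteq> ?Gp" using union_sub[OF K G sG] by blast
  then have "dim K \<le> dim G \<or> dim K \<le> dim ?Gp" using dim_subset by blast
  then have c2: "dim K \<le> dim G \<or> dim K \<le> DIM('a) - dim G"
    using dim_comp[OF G] by simp
  have "?Gp \<subseteq> K \<union> ?Kp"
  proof
    fix x assume "x \<in> ?Gp"
    then have "aa G x = 0" using aa_out G by blast
    then show "x \<in> K \<union> ?Kp" using key[of x] aa_full[OF K] aa_null[OF K] by auto
  qed
  then have "?Gp \<subseteq> K \<or> ?Gp \<subseteq> ?Kp" using union_sub[OF sG K sK] by blast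
  then have "dim ?Gp \<le> dim K \<or> dim ?Gp \<le> dim ?Kp" using dim_subset by blast
  then have c3: "DIM('a) - dim G \<le> dim K \<or> DIM('a) - dim G \<le> DIM('a) - dim K"
    using dim_comp[OF K] dim_comp[OF G] by simp
  have "?Kp \<subseteq> G \<union> ?Gp"
  proof
    fix x assume "x \<in> ?Kp"
    then have "aa K x = 0" using aa_out K by blast
    then show "x \<in> G \<union> ?Gp" using key[of x] aa_full[OF G] aa_null[OF G] by auto
  qed
  then have "?Kp \<subseteq> G \<or> ?Kp \<subseteq> ?Gp" using union_sub[OF sK G sG] by blast
  then have "dim ?Kp \<le> dim G \<or> dim ?Kp \<le> dim ?Gp" using dim_subset by blast
  then have c4: "DIM('a) - dim K \<le> dim G \<or> DIM('a) - dim K \<le> DIM('a) - dim G"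
    using dim_comp[OF K] dim_comp[OF G] by simp
  have "dim G \<le> DIM('a)" "dim K \<le> DIM('a)" by (simp_all add: dim_subset_UNIV)
  then show ?thesis using c1 c2 c3 c4 by linarith
next
  case False
  then have em: "\<epsilon> = -1" using e by auto
  have zero: "x = 0" if "aa G x = 0 \<or> aa G x = norm x ^ 2" "aa K x = 0 \<or> aa K x = norm x ^ 2" for x
  proof -
    have "h4 G x = (norm x ^ 2) ^ 2" "h4 K x = (norm x ^ 2) ^ 2"
      using that h4_alt[OF G, of x] h4_alt[OF K, of x] by auto
    moreover have "h4 K x = - h4 G x" using eq em by simp
    ultimately have "(norm x ^ 2) ^ 2 = 0" by simp
    then show ?thesis by simp
  qed
  let ?Gp = "orthogonal_comp G" and ?Kp = "orthogonal_comp K"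
  have sG: "subspace ?Gp" and sK: "subspace ?Kp" by (rule subspace_orthogonal_comp)+
  have i1: "G \<inter> K = {0}"
    using zero aa_in[OF G] aa_in[OF K] subspace_0[OF G] subspace_0[OF K] by blast
  have i2: "?Gp \<inter> ?Kp = {0}"
    using zero aa_out[OF G] aa_out[OF K] subspace_0[OF sG] subspace_0[OF sK] by blast
  have d1: "dim G + dim K \<le> DIM('a)"
    using dim_sums_Int[OF G K] i1 dim_subset_UNIV[of "{x + y |x y. x \<in> G \<and> y \<in> K}"] by simp
  have d2: "dim ?Gp + dim ?Kp \<le> DIM('a)"
    using dim_sums_Int[OF sG sK] i2 dim_subset_UNIV[of "{x + y |x y. x \<in> ?Gp \<and> y \<in> ?Kp}"] by simp
  have "dim G \<le> DIM('a)" "dim K \<le> DIM('a)" by (simp_all add: dim_subset_UNIV)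
  then show ?thesis using d1 d2 dim_comp[OF G] dim_comp[OF K] by linarith
qed

lemma pr_transport:
  assumes U: "orthogonal_transformation U" and H: "subspace H"
  shows "proj_sub (U ` H) (U x) = U (proj_sub H x)"
proof (rule pr_char)
  have lin: "linear U" using U orthogonal_transformation_linear by blast
  show "subspace (U ` H)" using H lin by (simp add: linear_subspace_image)
  show "U (proj_sub H x) \<in> U ` H" using pr_in[OF H] by blast
  show "\<forall>z\<in>U ` H. orthogonal (U x - U (proj_sub H x)) z"
  proof
    fix z assume "z \<in> U ` H"
    then obtain w where w: "w \<in> H" "z = U w" by blast
    have "orthogonal (U (x - proj_sub H x)) (U w)"
      using orthogonal_orthogonal_transformation[OF U] pr_orth[OF H w(1)] by blast
    then show "orthogonal (U x - U (proj_sub H x)) z" using w lin by (simp add: linear_diff)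
  qed
qed

lemma h4_transport:
  assumes U: "orthogonal_transformation U" and H: "subspace H"
  shows "h4 (U ` H) (U x) = h4 H x"
proof -
  have lin: "linear U" using U orthogonal_transformation_linear by blast
  show ?thesis
    unfolding h4_def Let_def pr_transport[OF assms]
    using orthogonal_transformation_norm[OF U] linear_diff[OF lin, of x "proj_sub H x", symmetric]
    by simp
qed


lemma pr_linear: assumes H: "subspace H" shows "linear (proj_sub H)"
proof (rule linearI)
  fix x y
  show "proj_sub H (x + y) = proj_sub H x + proj_sub H y"
  proof (rule pr_char[OF H])
    show "proj_sub H x + proj_sub H y \<in> H" using pr_in[OF H] H by (simp add: subspace_add)
    show "\<forall>z\<in>H. orthogonal (x + y - (proj_sub H x + proj_sub H y)) z"
    proof
      fix z assume "z \<in> H"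
      then have "orthogonal (x - proj_sub H x) z" "orthogonal (y - proj_sub H y) z" using pr_orth[OF H] by auto
      then show "orthogonal (x + y - (proj_sub H x + proj_sub H y)) z"
        by (simp add: orthogonal_def inner_diff_left inner_add_left)
    qed
  qed
next
  fix c :: real and x
  show "proj_sub H (c *\<^sub>R x) = c *\<^sub>R proj_sub H x"
  proof (rule pr_char[OF H])
    show "c *\<^sub>R proj_sub H x \<in> H" using pr_in[OF H] H by (simp add: subspace_scale)
    show "\<forall>z\<in>H. orthogonal (c *\<^sub>R x - c *\<^sub>R proj_sub H x) z"
    proof
      fix z assume "z \<in> H"
      then have "orthogonal (x - proj_sub H x) z" using pr_orth[OF H] by auto
      then show "orthogonal (c *\<^sub>R x - c *\<^sub>R proj_sub H x) z"
        by (simp add: orthogonal_def inner_diff_left)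
    qed
  qed
qed

lemma exists_ot:
  fixes S T :: "'a::euclidean_space set"
  assumes S: "subspace S" and T: "subspace T" and d: "dim S = dim T"
  shows "\<exists>U. orthogonal_transformation U \<and> U ` S = T"
proof -
  obtain f :: "'a \<Rightarrow> 'a" where f: "linear f" "f ` S = T" "\<And>x. x \<in> S \<Longrightarrow> norm (f x) = norm x"
    using isometry_subspaces[OF S T d] by metis
  have d2: "dim (orthogonal_comp S) = dim (orthogonal_comp T)"
    using dim_comp[OF S] dim_comp[OF T] d by simp
  obtain g :: "'a \<Rightarrow> 'a" where g: "linear g" "g ` orthogonal_comp S = orthogonal_comp T"
      "\<And>x. x \<in> orthogonal_comp S \<Longrightarrow> norm (g x) = norm x"
    using isometry_subspaces[OF subspace_orthogonal_comp subspace_orthogonal_comp d2] by metis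
  define U where "U x = f (proj_sub S x) + g (x - proj_sub S x)" for x
  have lp: "linear (proj_sub S)" by (rule pr_linear[OF S])
  have lin: "linear U"
  proof -
    have l1: "linear (\<lambda>x. x - proj_sub S x)" by (rule linear_compose_sub[OF linear_ident lp])
    have lg: "linear (\<lambda>x. g (x - proj_sub S x))" using linear_compose[OF l1 g(1)]
      by (simp add: o_def)
    have lf: "linear (\<lambda>x. f (proj_sub S x))" using linear_compose[OF lp f(1)]
      by (simp add: o_def)
    show ?thesis unfolding U_def[abs_def] by (rule linear_compose_add[OF lf lg])
  qed
  have nrm: "norm (U x) = norm x" for x
  proof -
    have "f (proj_sub S x) \<in> f ` S" using pr_in[OF S] by (rule imageI)
    then have a: "f (proj_sub S x) \<in> T" unfolding f(2) .
    have "g (x - proj_sub S x) \<in> g ` orthogonal_comp S" using pr_compl_in[OF S] by (rule imageI)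
    then have b: "g (x - proj_sub S x) \<in> orthogonal_comp T" unfolding g(2) .
    have o: "orthogonal (f (proj_sub S x)) (g (x - proj_sub S x))"
      using a b unfolding orthogonal_comp_def by simp
    have "norm (U x) ^ 2 = norm (f (proj_sub S x)) ^ 2 + norm (g (x - proj_sub S x)) ^ 2"
      unfolding U_def by (rule norm_add_Pythagorean[OF o])
    also have "\<dots> = norm (proj_sub S x) ^ 2 + norm (x - proj_sub S x) ^ 2"
      using f(3)[OF pr_in[OF S]] g(3)[OF pr_compl_in[OF S]] by simp
    also have "\<dots> = norm x ^ 2" by (rule pr_pyth[OF S, symmetric])
    finally show ?thesis by simp
  qed
  have ot: "orthogonal_transformation U" using lin nrm by (simp add: orthogonal_transformation)
  have Uf: "U x = f x" if "x \<in> S" for x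
    using pr_self[OF S that] g(1) by (simp add: U_def linear_0)
  have "U ` S = f ` S" by (rule image_cong[OF refl Uf])
  then have "U ` S = T" using f(2) by simp
  then show ?thesis using ot by (intro exI[of _ U]) simp
qed

theorem proposition1p2:
  fixes H1 H2 :: "'a::euclidean_space set"
  assumes "subspace H1" and "subspace H2"
  shows "congruent_fun (h4 H1) (h4 H2) \<longleftrightarrow>
           dim H1 = dim H2 \<or> dim H1 = DIM('a) - dim H2"
proof
  assume "congruent_fun (h4 H1) (h4 H2)"
  then obtain U \<epsilon> where U: "orthogonal_transformation U" and e: "\<epsilon> \<in> {1, -1}"
    and eq: "\<forall>x. h4 H2 x = \<epsilon> * h4 H1 (U x)"
    unfolding congruent_fun_def by blast
  define G where "G = inv U ` H1"
  have su: "surj U" by (rule orthogonal_transformation_surj[OF U])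
  have UG: "U ` G = H1" unfolding G_def image_image using surj_f_inv_f[OF su] by simp
  have li: "linear (inv U)" using orthogonal_transformation_inv[OF U] orthogonal_transformation_linear by blast
  have l: "linear U" using U orthogonal_transformation_linear by blast
  have sG: "subspace G" unfolding G_def using assms(1) li by (simp add: linear_subspace_image)
  have "dim G \<le> dim H1" unfolding G_def by (rule dim_image_le[OF li])
  moreover have "dim H1 \<le> dim G" using dim_image_le[OF l, of G] UG by simp
  ultimately have dG: "dim G = dim H1" by simp
  have "\<forall>x. h4 H2 x = \<epsilon> * h4 G x"
    using eq h4_transport[OF U sG] UG by simp
  then show "dim H1 = dim H2 \<or> dim H1 = DIM('a) - dim H2"
    using core[OF sG assms(2) e] dG by simp
next
  assume d: "dim H1 = dim H2 \<or> dim H1 = DIM('a) - dim H2"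
  have "\<exists>K. subspace K \<and> dim K = dim H1 \<and> (\<forall>x. h4 K x = h4 H2 x)"
  proof (cases "dim H1 = dim H2")
    case True then show ?thesis using assms(2) by (intro exI[of _ H2]) simp
  next
    case False
    then have "dim H1 = dim (orthogonal_comp H2)" using d dim_comp[OF assms(2)] by simp
    then show ?thesis using h4_comp[OF assms(2)] subspace_orthogonal_comp
      by (intro exI[of _ "orthogonal_comp H2"]) simp
  qed
  then obtain K where K: "subspace K" "dim K = dim H1" "\<forall>x. h4 K x = h4 H2 x" by blast
  obtain U where U: "orthogonal_transformation U" "U ` K = H1"
    using exists_ot[OF K(1) assms(1) K(2)] by blast
  have "h4 H2 x = 1 * h4 H1 (U x)" for x
    using h4_transport[OF U(1) K(1), of x] U(2) K(3) by simp
  then show "congruent_fun (h4 H1) (h4 H2)"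
    unfolding congruent_fun_def using U(1) by (intro exI[of _ U] exI[of _ 1]) simp
qed

end
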